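(* Let $f:\mathcal X^n\to\mathcal T$ with $\mathcal T$ finite, let $\varepsilon>0$, and let $M$ be an $\varepsilon$-differentially private mechanism with values in $\mathcal T$. Then $$\inf_{x\in\mathcal X^n}\mathbb P(M(x)=f(x))\le \inf_{x\in\mathcal X^n}\frac{1}{\sum_{t\in\mathcal T}e^{-\mathrm{len}_f(x;t)\varepsilon}}.$$ If in addition $M$ is $L_{0,1}$-unbiased, where $L_{0,1}(s,t)=\mathbf 1\{s\neq t\}$, then for every $x\in\mathcal X^n$, $$\mathbb P(M(x)=f(x))\le \frac{1}{\sum_{t\in\mathcal T}e^{-2\,\mathrm{len}_f(x;t)\varepsilon}}.$$
   Context: For $x=(x_1,\dots,x_n),x'\in\mathcal X^n$, $d_H(x,x')=|\{i:x_i\neq x_i'\}|$ is the Hamming distance; $x,x'$ are neighboring if $d_H(x,x')\le 1$. A mechanism is a randomized map $M$ from $\mathcal X^n$ to a measurable space; $M$ is $(\varepsilon,\delta)$-differentially private if for all neighboring $x,x'$ and all measurable $S$, $\mathbb P(M(x)\in S)\le e^{\varepsilon}\mathbb P(M(x')\in S)+\delta$, and $\varepsilon$-differentially private if this holds with $\delta=0$. The inverse sensitivity is $\mathrm{len}_f(x;t)=\inf\{d_H(x,x'):x'\in\mathcal X^n,\ f(x')=t\}$, with $\inf\emptyset=+\infty$ and $e^{-\infty}=0$. For a loss $L:\mathcal T\times\mathcal T\to\mathbb R_+$, a mechanism $M$ is $L$-unbiased if $\mathbb E[L(M(x),f(x))]\le \mathbb E[L(M(x),t)]$ for all $x\in\mathcal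 X^n$ and $t\in\mathcal T$; for $L_{0,1}$ this means $\mathbb P(M(x)=f(x))\ge \mathbb P(M(x)=t)$ for all $t$. *)

theory Defs
  imports "HOL-Probability.Probability"
begin

text \<open>Datasets in X^n are lists of length n over the type 'a (= X).
  A mechanism with values in the finite set T (a finite type 't) is a map to
  probability mass functions on 't (all subsets measurable).\<close>

definition datasets :: "nat \<Rightarrow> 'a list set" where
  "datasets n = {x. length x = n}"

definition hamming :: "'a list \<Rightarrow> 'a list \<Rightarrow> nat" where
  "hamming x x' = card {i. i < length x \<and> x ! i \<noteq> x' ! i}"

definition neighboring :: "'a list \<Rightarrow> 'a list \<Rightarrow> bool" where
  "neighboring x x' \<longleftrightarrow> hamming x x' \<le> 1"

definition pure_dp :: "nat \<Rightarrow> real \<Rightarrow> ('a list \<Rightarrow> 't pmf) \<Rightarrow> bool" where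
  "pure_dp n \<epsilon> M \<longleftrightarrow>
     (\<forall>x\<in>datasets n. \<forall>x'\<in>datasets n. neighboring x x' \<longrightarrow>
        (\<forall>S. measure_pmf.prob (M x) S \<le> exp \<epsilon> * measure_pmf.prob (M x') S))"

text \<open>Inverse sensitivity, valued in extended naturals (INF of the empty set is \<infinity>).\<close>
definition inv_len :: "nat \<Rightarrow> ('a list \<Rightarrow> 't) \<Rightarrow> 'a list \<Rightarrow> 't \<Rightarrow> enat" where
  "inv_len n f x t = (INF x'\<in>{x'\<in>datasets n. f x' = t}. enat (hamming x x'))"

text \<open>e^{-len * c}, with e^{-\<infinity>} = 0.\<close>
definition exp_neg_len :: "enat \<Rightarrow> real \<Rightarrow> real" where
  "exp_neg_len l c = (case l of enat k \<Rightarrow> exp (- (real k) * c) | \<infinity> \<Rightarrow> 0)"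

definition unbiased :: "nat \<Rightarrow> ('t \<Rightarrow> 't \<Rightarrow> real) \<Rightarrow> ('a list \<Rightarrow> 't) \<Rightarrow> ('a list \<Rightarrow> 't pmf) \<Rightarrow> bool" where
  "unbiased n L f M \<longleftrightarrow>
     (\<forall>x\<in>datasets n. \<forall>t.
        measure_pmf.expectation (M x) (\<lambda>s. L s (f x)) \<le> measure_pmf.expectation (M x) (\<lambda>s. L s t))"

definition L01 :: "'t \<Rightarrow> 't \<Rightarrow> real" where
  "L01 s t = (if s \<noteq> t then 1 else 0)"

end

theory Submission
  imports Defs
begin

lemma hamming_sym: "length x = length x' \<Longrightarrow> hamming x x' = hamming x' x"
  unfolding hamming_def by (metis)

lemma hamming_refl: "hamming x x = 0"
  unfolding hamming_def by simp

lemma group_priv: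
  assumes dp: "pure_dp n \<epsilon> M"
  shows "\<And>x. x \<in> datasets n \<Longrightarrow> x' \<in> datasets n \<Longrightarrow> hamming x x' = k \<Longrightarrow>
     measure_pmf.prob (M x) S \<le> exp (real k * \<epsilon>) * measure_pmf.prob (M x') S"
proof (induction k)
  case 0
  have "x = x'"
  proof (rule nth_equalityI)
    show "length x = length x'" using 0 by (simp add: datasets_def)
    fix i assume "i < length x"
    with 0 show "x ! i = x' ! i" unfolding hamming_def
      by (auto simp: card_eq_0_iff)
  qed
  then show ?case by simp
next
  case (Suc j x)
  define D where "D = {i. i < length x \<and> x ! i \<noteq> x' ! i}"
  have fin: "finite D" unfolding D_def by simp
  have cD: "card D = Suc j" using Suc.prems unfolding D_def hamming_def by simp
  then obtain i where iD: "i \<in> D" by (metis card.empty ex_in_conv nat.distinct(1))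
  define y where "y = x[i := x' ! i]"
  have ly: "length y = length x" by (simp add: y_def)
  have ydat: "y \<in> datasets n" using Suc.prems ly by (simp add: datasets_def)
  have "{k. k < length y \<and> y ! k \<noteq> x' ! k} = D - {i}"
    using iD unfolding y_def D_def by (auto simp: nth_list_update split: if_splits)
  then have hy: "hamming y x' = j" unfolding hamming_def using cD fin iD by simp
  have "{k. k < length x \<and> x ! k \<noteq> y ! k} \<subseteq> {i}"
  proof
    fix k assume k: "k \<in> {k. k < length x \<and> x ! k \<noteq> y ! k}"
    show "k \<in> {i}"
    proof (rule ccontr)
      assume "k \<notin> {i}"
      then have "y ! k = x ! k" unfolding y_def by simp
      with k show False by simp
    qed
  qed
  then have "hamming x y \<le> 1" unfolding hamming_def
    by (metis card.empty card.insert card_mono finite.emptyI finite.insertI empty_iff One_nat_def)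
  then have nb: "neighboring x y" by (simp add: neighboring_def)
  have s1: "measure_pmf.prob (M x) S \<le> exp \<epsilon> * measure_pmf.prob (M y) S"
    using dp Suc.prems ydat nb unfolding pure_dp_def by blast
  have s2: "measure_pmf.prob (M y) S \<le> exp (real j * \<epsilon>) * measure_pmf.prob (M x') S"
    using Suc.IH[OF ydat Suc.prems(2) hy] .
  have "measure_pmf.prob (M x) S \<le> exp \<epsilon> * (exp (real j * \<epsilon>) * measure_pmf.prob (M x') S)"
    using s1 s2 by (meson mult_left_mono exp_ge_zero order_trans)
  also have "\<dots> = exp (real (Suc j) * \<epsilon>) * measure_pmf.prob (M x') S"
    by (simp add: distrib_right exp_add)
  finally show ?case .
qed

lemma inv_len_attained:
  assumes "inv_len n f x t = enat k"
  shows "\<exists>x'\<in>datasets n. f x' = t \<and> hamming x x' = k"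
proof -
  let ?A = "(\<lambda>x'. enat (hamming x x')) ` {x'\<in>datasets n. f x' = t}"
  have "?A \<noteq> {}"
  proof
    assume "?A = {}"
    then have "inv_len n f x t = top" unfolding inv_len_def by (simp only: Inf_empty)
    with assms show False by (simp add: top_enat_def)
  qed
  then obtain a where "a \<in> ?A" by blast
  then have "Inf ?A \<in> ?A" by (rule wellorder_InfI)
  then show ?thesis using assms unfolding inv_len_def by auto
qed

lemma inv_len_self:
  assumes "x \<in> datasets n" shows "inv_len n f x (f x) = 0"
proof -
  have "inv_len n f x (f x) \<le> enat (hamming x x)"
    unfolding inv_len_def using assms by (intro INF_lower) auto
  then show ?thesis by (simp add: hamming_refl zero_enat_def[symmetric])
qed

lemma sum_bound:
  fixes M :: "'a list \<Rightarrow> 't::finite pmf" and f :: "'a list \<Rightarrow> 't"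
  assumes x: "x \<in> datasets n" and c: "c \<ge> 0"
    and lb: "\<And>t k. inv_len n f x t = enat k \<Longrightarrow> m * exp (- real k * c) \<le> pmf (M x) t"
  shows "m \<le> 1 / (\<Sum>t\<in>UNIV. exp_neg_len (inv_len n f x t) c)"
proof -
  let ?S = "\<Sum>t\<in>UNIV. exp_neg_len (inv_len n f x t) c"
  have nn: "\<And>t. exp_neg_len (inv_len n f x t) c \<ge> 0"
    unfolding exp_neg_len_def by (auto split: enat.split)
  have "exp_neg_len (inv_len n f x (f x)) c = 1"
    unfolding exp_neg_len_def using inv_len_self[OF x, of f] by (simp add: zero_enat_def)
  moreover have "exp_neg_len (inv_len n f x (f x)) c \<le> ?S"
    by (rule member_le_sum) (auto intro: nn)
  ultimately have "1 \<le> ?S" by simp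
  have "m * ?S = (\<Sum>t\<in>UNIV. m * exp_neg_len (inv_len n f x t) c)"
    by (simp add: sum_distrib_left)
  also have "\<dots> \<le> (\<Sum>t\<in>UNIV. pmf (M x) t)"
  proof (rule sum_mono)
    fix t show "m * exp_neg_len (inv_len n f x t) c \<le> pmf (M x) t"
      using lb by (cases "inv_len n f x t") (auto simp: exp_neg_len_def)
  qed
  also have "\<dots> = 1" by (rule sum_pmf_eq_1) auto
  finally show ?thesis using \<open>1 \<le> ?S\<close> by (simp add: field_simps)
qed

lemma part1:
  fixes n :: nat and f :: "'a list \<Rightarrow> 't::finite" and M :: "'a list \<Rightarrow> 't pmf"
    and \<epsilon> :: real
  assumes "\<epsilon> > 0" and "pure_dp n \<epsilon> M"
  shows "(INF x\<in>datasets n. measure_pmf.prob (M x) {f x}) \<le> (INF x\<in>datasets n. 1 / (\<Sum>t\<in>UNIV. exp_neg_len (inv_len n f x t) \<epsilon>))"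
proof -
  have ne: "datasets n \<noteq> {}"
    by (metis (mono_tags) datasets_def empty_iff length_replicate mem_Collect_eq)
  let ?m = "INF x\<in>datasets n. measure_pmf.prob (M x) {f x}"
  have bdd: "bdd_below ((\<lambda>x. measure_pmf.prob (M x) {f x}) ` datasets n)"
    by (rule bdd_belowI[of _ 0]) auto
  show ?thesis
  proof (rule cINF_greatest[OF ne])
    fix x :: "'a list" assume x: "x \<in> datasets n"
    show "?m \<le> 1 / (\<Sum>t\<in>UNIV. exp_neg_len (inv_len n f x t) \<epsilon>)"
    proof (rule sum_bound[OF x])
      show "0 \<le> \<epsilon>" using assms by simp
      fix t k assume il: "inv_len n f x t = enat k"
      obtain x' where x': "x' \<in> datasets n" "f x' = t" "hamming x x' = k"
        using inv_len_attained[OF il] by blast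
      have h': "hamming x' x = k" using x' x hamming_sym by (metis datasets_def mem_Collect_eq)
      have "?m \<le> measure_pmf.prob (M x') {t}"
        using cINF_lower[OF bdd x'(1)] x'(2) by simp
      also have "\<dots> \<le> exp (real k * \<epsilon>) * measure_pmf.prob (M x) {t}"
        using group_priv[OF assms(2) x'(1) x h'] .
      finally have "?m \<le> exp (real k * \<epsilon>) * pmf (M x) t" by (simp add: measure_pmf_single)
      then have "?m * exp (- real k * \<epsilon>) \<le> exp (real k * \<epsilon>) * pmf (M x) t * exp (- real k * \<epsilon>)"
        by (simp add: mult_right_mono)
      also have "\<dots> = pmf (M x) t" by (simp add: exp_minus field_simps)
      finally show "?m * exp (- real k * \<epsilon>) \<le> pmf (M x) t" .
    qed
  qed
qed

lemma part2:
  fixes n :: nat and f :: "'a list \<Rightarrow> 't::finite" and M :: "'a list \<Rightarrow> 't pmf"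
    and \<epsilon> :: real
  assumes "\<epsilon> > 0" and "pure_dp n \<epsilon> M"
  shows "unbiased n L01 f M \<longrightarrow>
         (\<forall>x\<in>datasets n. measure_pmf.prob (M x) {f x}
            \<le> 1 / (\<Sum>t\<in>UNIV. exp_neg_len (inv_len n f x t) (2 * \<epsilon>)))"
  proof (intro impI ballI)
    assume ub: "unbiased n L01 f M"
    have exL: "\<And>y t. measure_pmf.expectation (M y) (\<lambda>s. L01 s t) = 1 - pmf (M y) t"
    proof -
      fix y :: "'a list" and t :: 't
      have "(\<lambda>s. L01 s t) = indicator (- {t})" by (auto simp: L01_def fun_eq_iff)
      then have "measure_pmf.expectation (M y) (\<lambda>s. L01 s t) = measure_pmf.prob (M y) (- {t})"
        by simp
      also have "\<dots> = 1 - pmf (M y) t"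
        by (simp add: measure_pmf.prob_compl[of "{t}", simplified] Compl_eq_Diff_UNIV measure_pmf_single)
      finally show "measure_pmf.expectation (M y) (\<lambda>s. L01 s t) = 1 - pmf (M y) t" .
    qed
    have ubp: "\<And>y t. y \<in> datasets n \<Longrightarrow> pmf (M y) t \<le> pmf (M y) (f y)"
    proof -
      fix y :: "'a list" and t :: 't assume y: "y \<in> datasets n"
      have "measure_pmf.expectation (M y) (\<lambda>s. L01 s (f y)) \<le> measure_pmf.expectation (M y) (\<lambda>s. L01 s t)"
        using ub y unfolding unbiased_def by blast
      then show "pmf (M y) t \<le> pmf (M y) (f y)" unfolding exL by simp
    qed
    fix x :: "'a list" assume x: "x \<in> datasets n"
    show "measure_pmf.prob (M x) {f x} \<le> 1 / (\<Sum>t\<in>UNIV. exp_neg_len (inv_len n f x t) (2 * \<epsilon>))"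
    proof (rule sum_bound[OF x])
      show "0 \<le> 2 * \<epsilon>" using assms by simp
      fix t k assume il: "inv_len n f x t = enat k"
      obtain x' where x': "x' \<in> datasets n" "f x' = t" "hamming x x' = k"
        using inv_len_attained[OF il] by blast
      have h': "hamming x' x = k" using x' x hamming_sym by (metis datasets_def mem_Collect_eq)
      let ?p = "pmf (M x) (f x)"
      have "?p \<le> exp (real k * \<epsilon>) * pmf (M x') (f x)"
        using group_priv[OF assms(2) x x'(1) x'(3), of "{f x}"] by (simp add: measure_pmf_single)
      also have "\<dots> \<le> exp (real k * \<epsilon>) * pmf (M x') t"
        using ubp[OF x'(1), of "f x"] x'(2) by (simp add: mult_left_mono)
      also have "\<dots> \<le> exp (real k * \<epsilon>) * (exp (real k * \<epsilon>) * pmf (M x) t)"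
        using group_priv[OF assms(2) x'(1) x h', of "{t}"] by (simp add: measure_pmf_single mult_left_mono)
      also have "\<dots> = exp (real k * (2 * \<epsilon>)) * pmf (M x) t"
        by (simp add: exp_add[symmetric] algebra_simps)
      finally have le: "?p \<le> exp (real k * (2 * \<epsilon>)) * pmf (M x) t" .
      have "?p * exp (- real k * (2 * \<epsilon>)) \<le> exp (real k * (2 * \<epsilon>)) * pmf (M x) t * exp (- real k * (2 * \<epsilon>))"
        using le by (simp add: mult_right_mono)
      also have "\<dots> = pmf (M x) t" by (simp add: exp_minus field_simps)
      finally show "measure_pmf.prob (M x) {f x} * exp (- real k * (2 * \<epsilon>)) \<le> pmf (M x) t"
        by (simp add: measure_pmf_single)
    qed
  qed

theorem proposition2p1:
  fixes n :: nat and f :: "'a list \<Rightarrow> 't::finite" and M :: "'a list \<Rightarrow> 't pmf"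
    and \<epsilon> :: real
  assumes "\<epsilon> > 0" and "pure_dp n \<epsilon> M"
  shows "(INF x\<in>datasets n. measure_pmf.prob (M x) {f x})
           \<le> (INF x\<in>datasets n. 1 / (\<Sum>t\<in>UNIV. exp_neg_len (inv_len n f x t) \<epsilon>))
         \<and> (unbiased n L01 f M \<longrightarrow>
         (\<forall>x\<in>datasets n. measure_pmf.prob (M x) {f x}
            \<le> 1 / (\<Sum>t\<in>UNIV. exp_neg_len (inv_len n f x t) (2 * \<epsilon>))))"
  using part1[OF assms] part2[OF assms] by (rule conjI)

end
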